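(* Let $J_1,J_2\in\mathbb{R}$, $\beta>0$, $a=e^{J_1\beta}$, $b=e^{J_2\beta}$, and let $F$ and $M_1$ be as below. 1) If $J_2>0$, then for every integer $p\ge2$ the equation $F^p(u)=u$ has no solution $u\in M_1\setminus \mathrm{Fix}(F)$. 2) If $J_2<0$, then for every integer $p\ge3$ the equation $F^p(u)=u$ has no solution $u\in M_1\setminus(\mathrm{Fix}(F)\cup\mathrm{Per}_2(F))$.
   Context: $F:\mathbb{R}^4_+\to\mathbb{R}^4_+$ (positive coordinates) is $F(u)=(u_1',u_2',u_3',u_4')$ with $u_1'=a(bu_1+b^{-1}u_2)^2$, $u_2'=a^{-1}(bu_3+b^{-1}u_4)^2$, $u_3'=a^{-1}(b^{-1}u_1+bu_2)^2$, $u_4'=a(b^{-1}u_3+bu_4)^2$. $M_1=\{u\in\mathbb{R}^4_+:\ u_1=u_4,\ u_2=u_3\}$. $F^p$ is the $p$-th iterate, $\mathrm{Fix}(F)=\{u:F(u)=u\}$, and $\mathrm{Per}_2(F)$ is the set of points of prime (least) period $2$ of $F$. *)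

theory Defs
  imports Complex_Main
begin

type_synonym vec4 = "real \<times> real \<times> real \<times> real"

definition F :: "real \<Rightarrow> real \<Rightarrow> vec4 \<Rightarrow> vec4" where
  "F a b u = (case u of (u1, u2, u3, u4) \<Rightarrow>
     (a * (b * u1 + u2 / b)^2,
      (1 / a) * (b * u3 + u4 / b)^2,
      (1 / a) * (u1 / b + b * u2)^2,
      a * (u3 / b + b * u4)^2))"

definition pos4 :: "vec4 set" where
  "pos4 = {(u1, u2, u3, u4). u1 > 0 \<and> u2 > 0 \<and> u3 > 0 \<and> u4 > 0}"

definition M1 :: "vec4 set" where
  "M1 = {u \<in> pos4. case u of (u1, u2, u3, u4) \<Rightarrow> u1 = u4 \<and> u2 = u3}"

definition Fix :: "(vec4 \<Rightarrow> vec4) \<Rightarrow> vec4 set" where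
  "Fix f = {u \<in> pos4. f u = u}"

definition Per2 :: "(vec4 \<Rightarrow> vec4) \<Rightarrow> vec4 set" where
  "Per2 f = {u \<in> pos4. (f ^^ 2) u = u \<and> f u \<noteq> u}"

end

theory Submission
  imports Defs
begin

definition fm :: "real \<Rightarrow> real \<Rightarrow> real \<times> real \<Rightarrow> real \<times> real" where
  "fm a b q = (a * (b * fst q + snd q / b)^2, (1/a) * (fst q / b + b * snd q)^2)"

definition emb :: "real \<times> real \<Rightarrow> vec4" where
  "emb q = (fst q, snd q, snd q, fst q)"

definition sc :: "real \<Rightarrow> real \<times> real \<Rightarrow> real \<times> real" where
  "sc l q = (l * fst q, l * snd q)"

definition gr :: "real \<Rightarrow> real \<Rightarrow> real \<Rightarrow> real" where
  "gr a b t = a^2 * ((b^2 * t + 1) / (t + b^2))^2"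

definition ps :: "real \<times> real \<Rightarrow> bool" where
  "ps q \<longleftrightarrow> fst q > 0 \<and> snd q > 0"

lemma F_emb: "F a b (emb q) = emb (fm a b q)"
  by (cases q) (simp add: F_def emb_def fm_def add.commute)

lemma F_emb_pow: "(F a b ^^ n) (emb q) = emb ((fm a b ^^ n) q)"
  by (induction n) (simp_all add: F_emb)

lemma emb_inj: "emb q = emb r \<Longrightarrow> q = r"
  by (cases q, cases r) (simp add: emb_def)

lemma fm_ps: "a > 0 \<Longrightarrow> b > 0 \<Longrightarrow> ps q \<Longrightarrow> ps (fm a b q)"
proof -
  assume a: "a > 0" and b: "b > 0" and q: "ps q"
  have "b * fst q + snd q / b > 0" "fst q / b + b * snd q > 0" using b q by (simp_all add: ps_def add_pos_pos)
  then show ?thesis using a by (simp add: ps_def fm_def)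
qed

lemma fm_pow_ps: "a > 0 \<Longrightarrow> b > 0 \<Longrightarrow> ps q \<Longrightarrow> ps ((fm a b ^^ n) q)"
  by (induction n) (simp_all add: fm_ps)

lemma fm_ratio:
  assumes "a > 0" "b > 0" "ps q"
  shows "fst (fm a b q) / snd (fm a b q) = gr a b (fst q / snd q)"
proof -
  obtain x y where q: "q = (x, y)" by (cases q)
  have x: "x > 0" and y: "y > 0" using assms(3) q by (auto simp: ps_def)
  have f1: "b * x + y / b = (b^2*x+y)/b" "x / b + b * y = (x+b^2*y)/b"
    using assms by (simp_all add: field_simps power2_eq_square)
  have e1: "(b * x + y / b) / (x / b + b * y) = (b^2 * x + y) / (x + b^2 * y)"
    unfolding f1 using assms by simp
  have f2: "b^2 * (x/y) + 1 = (b^2 * x + y) / y" "x/y + b^2 = (x + b^2 * y) / y"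
    using y by (simp_all add: field_simps)
  have e2: "(b^2 * (x/y) + 1) / (x/y + b^2) = (b^2 * x + y) / (x + b^2 * y)"
    unfolding f2 using y by simp
  have "(b * x + y / b) / (x / b + b * y) = (b^2 * (x/y) + 1) / (x/y + b^2)"
    using e1 e2 by simp
  then have "((b * x + y / b) / (x / b + b * y))^2 = ((b^2 * (x/y) + 1) / (x/y + b^2))^2"
    by simp
  moreover have "x / b + b * y > 0" using x y assms by (simp add: add_pos_pos)
  moreover have "fst (fm a b q) / snd (fm a b q) = a^2 * ((b * x + y / b) / (x / b + b * y))^2"
    using q assms calculation(2) by (simp add: fm_def power_divide field_simps power2_eq_square)
  ultimately show ?thesis by (simp add: gr_def q)
qed

lemma ratio_pow:
  assumes "a > 0" "b > 0" "ps q"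
  shows "fst ((fm a b ^^ n) q) / snd ((fm a b ^^ n) q) = (gr a b ^^ n) (fst q / snd q)"
proof (induction n)
  case 0 then show ?case by simp
next
  case (Suc n)
  have "ps ((fm a b ^^ n) q)" using fm_pow_ps assms by blast
  then show ?case using Suc fm_ratio[OF assms(1,2)] by simp
qed

lemma fm_sc: "fm a b (sc l q) = sc (l^2) (fm a b q)"
  by (simp add: fm_def sc_def field_simps power2_eq_square)

lemma fm_pow_sc: "(fm a b ^^ m) (sc l q) = sc (l^(2^m)) ((fm a b ^^ m) q)"
proof (induction m)
  case 0 then show ?case by simp
next
  case (Suc m)
  then show ?case by (simp add: fm_sc power_mult[symmetric] mult.commute)
qed

lemma sc_sc: "sc l (sc k q) = sc (l*k) q"
  by (simp add: sc_def)

lemma sc_fix: "ps q \<Longrightarrow> sc l q = q \<Longrightarrow> l = 1"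
  by (cases q) (auto simp: sc_def ps_def)

lemma gr_pos: "a > 0 \<Longrightarrow> b > 0 \<Longrightarrow> t > 0 \<Longrightarrow> gr a b t > 0"
proof -
  assume "a > 0" "b > 0" "t > 0"
  moreover have "b^2 > 0" using \<open>b > 0\<close> by simp
  ultimately have "t + b^2 > 0" "b^2*t + 1 > 0" by (simp_all add: add_pos_pos)
  then show ?thesis using \<open>a > 0\<close> by (simp add: gr_def)
qed

lemma gr_pow_pos: "a > 0 \<Longrightarrow> b > 0 \<Longrightarrow> t > 0 \<Longrightarrow> (gr a b ^^ n) t > 0"
  by (induction n) (simp_all add: gr_pos)

lemma h_pos:
  fixes b t :: real
  assumes "0 < b" "0 < t"
  shows "0 < (b^2 * t + 1) / (t + b^2)"
proof -
  have "b^2 > 0" using assms by simp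
  then have "t + b^2 > 0" "b^2*t + 1 > 0" using assms by (simp_all add: add_pos_pos)
  then show ?thesis by simp
qed

lemma h_mono:
  fixes b s t :: real
  assumes "b > 1" "0 < s" "s < t"
  shows "(b^2 * s + 1) / (s + b^2) < (b^2 * t + 1) / (t + b^2)"
proof -
  have "b^4 > 1" using assms one_less_power[of b 4] by simp
  then have "(b^4 - 1) * (t - s) > 0" using assms by simp
  then have "(b^2 * s + 1) * (t + b^2) < (b^2 * t + 1) * (s + b^2)"
    by (simp add: algebra_simps power2_eq_square power4_eq_xxxx)
  then show ?thesis using assms by (simp add: divide_simps add_pos_pos)
qed

lemma h_anti:
  fixes b s t :: real
  assumes "0 < b" "b < 1" "0 < s" "s < t"
  shows "(b^2 * t + 1) / (t + b^2) < (b^2 * s + 1) / (s + b^2)"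
proof -
  have "b^4 < 1" using assms by (simp add: power_less_one_iff)
  then have "(1 - b^4) * (t - s) > 0" using assms by simp
  then have "(b^2 * t + 1) * (s + b^2) < (b^2 * s + 1) * (t + b^2)"
    by (simp add: algebra_simps power2_eq_square power4_eq_xxxx)
  then show ?thesis using assms by (simp add: divide_simps add_pos_pos)
qed

lemma gr_mono:
  assumes "a > 0" "b > 1" "0 < s" "s < t"
  shows "gr a b s < gr a b t"
proof -
  have p: "0 < (b^2 * s + 1) / (s + b^2)" using assms h_pos by simp
  have "((b^2 * s + 1) / (s + b^2))^2 < ((b^2 * t + 1) / (t + b^2))^2"
    using h_mono[OF assms(2-4)] p by (simp add: power_strict_mono)
  then show ?thesis using assms by (simp add: gr_def)
qed

lemma gr_anti:
  assumes "a > 0" "0 < b" "b < 1" "0 < s" "s < t"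
  shows "gr a b t < gr a b s"
proof -
  have p: "0 < (b^2 * t + 1) / (t + b^2)" using assms h_pos by simp
  have "((b^2 * t + 1) / (t + b^2))^2 < ((b^2 * s + 1) / (s + b^2))^2"
    using h_anti[OF assms(2-5)] p by (simp add: power_strict_mono)
  then show ?thesis using assms by (simp add: gr_def)
qed

lemma per_mono_aux:
  fixes g :: "real \<Rightarrow> real"
  assumes mono: "\<And>s t. 0 < s \<Longrightarrow> s < t \<Longrightarrow> g s < g t"
    and pos: "\<And>s. 0 < s \<Longrightarrow> 0 < g s"
    and t: "0 < t" and gt: "t < g t"
  shows "t < (g ^^ Suc n) t"
proof -
  have ppos: "\<And>n. 0 < (g ^^ n) t"
  proof -
    fix n show "0 < (g ^^ n) t" by (induction n) (simp_all add: t pos)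
  qed
  have step: "\<And>n. (g ^^ n) t < (g ^^ Suc n) t"
  proof -
    fix n show "(g ^^ n) t < (g ^^ Suc n) t"
    proof (induction n)
      case 0 then show ?case using gt by simp
    next
      case (Suc n) then show ?case using mono ppos by simp
    qed
  qed
  show ?thesis
  proof (induction n)
    case 0 then show ?case using gt by simp
  next
    case (Suc n) then show ?case using step[of "Suc n"] by linarith
  qed
qed

lemma per_mono_aux2:
  fixes g :: "real \<Rightarrow> real"
  assumes mono: "\<And>s t. 0 < s \<Longrightarrow> s < t \<Longrightarrow> g s < g t"
    and pos: "\<And>s. 0 < s \<Longrightarrow> 0 < g s"
    and t: "0 < t" and gt: "g t < t"
  shows "(g ^^ Suc n) t < t"
proof -
  have ppos: "\<And>n. 0 < (g ^^ n) t"
  proof -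
    fix n show "0 < (g ^^ n) t" by (induction n) (simp_all add: t pos)
  qed
  have step: "\<And>n. (g ^^ Suc n) t < (g ^^ n) t"
  proof -
    fix n show "(g ^^ Suc n) t < (g ^^ n) t"
    proof (induction n)
      case 0 then show ?case using gt by simp
    next
      case (Suc n)
      have "0 < g ((g ^^ n) t)" using ppos[of "Suc n"] by simp
      then show ?case using mono Suc by simp
    qed
  qed
  show ?thesis
  proof (induction n)
    case 0 then show ?case using gt by simp
  next
    case (Suc n) then show ?case using step[of "Suc n"] by linarith
  qed
qed

lemma per_mono:
  fixes g :: "real \<Rightarrow> real"
  assumes mono: "\<And>s t. 0 < s \<Longrightarrow> s < t \<Longrightarrow> g s < g t"
    and pos: "\<And>s. 0 < s \<Longrightarrow> 0 < g s"
    and t: "0 < t" and p: "p \<ge> 1" and per: "(g ^^ p) t = t"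
  shows "g t = t"
proof -
  obtain n where n: "p = Suc n" using p by (cases p) auto
  show ?thesis
  proof (rule ccontr)
    assume "g t \<noteq> t"
    then consider "t < g t" | "g t < t" by linarith
    then show False
    proof cases
      case 1 then show False using per_mono_aux[where g=g and t=t and n=n, OF mono pos t] per n by simp
    next
      case 2 then show False using per_mono_aux2[where g=g and t=t and n=n, OF mono pos t] per n by simp
    qed
  qed
qed

lemma scale_up:
  assumes "\<mu> > 1" and fmq: "(fm a b ^^ m) q = sc \<mu> q"
  shows "\<exists>\<nu>. (fm a b ^^ (m * Suc n)) q = sc \<nu> q \<and> \<nu> > 1"
proof (induction n)
  case 0 then show ?case using assms by auto
next
  case (Suc n)
  then obtain \<nu> where nu: "(fm a b ^^ (m * Suc n)) q = sc \<nu> q" "\<nu> > 1" by blast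
  have "(fm a b ^^ (m * Suc (Suc n))) q = (fm a b ^^ m) ((fm a b ^^ (m * Suc n)) q)"
  proof -
    have "m * Suc (Suc n) = m + m * Suc n" by simp
    then show ?thesis by (simp only: funpow_add o_apply)
  qed
  also have "\<dots> = sc (\<nu>^(2^m) * \<mu>) q" using nu fmq by (simp add: fm_pow_sc sc_sc)
  finally show ?case
    using nu assms(1) by (intro exI[of _ "\<nu>^(2^m) * \<mu>"]) (simp add: one_less_power less_1_mult)
qed

lemma scale_down:
  assumes "0 < \<mu>" "\<mu> < 1" and fmq: "(fm a b ^^ m) q = sc \<mu> q"
  shows "\<exists>\<nu>. (fm a b ^^ (m * Suc n)) q = sc \<nu> q \<and> 0 < \<nu> \<and> \<nu> < 1"
proof (induction n)
  case 0 then show ?case using assms by auto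
next
  case (Suc n)
  then obtain \<nu> where nu: "(fm a b ^^ (m * Suc n)) q = sc \<nu> q" "0 < \<nu>" "\<nu> < 1" by blast
  have "(fm a b ^^ (m * Suc (Suc n))) q = (fm a b ^^ m) ((fm a b ^^ (m * Suc n)) q)"
  proof -
    have "m * Suc (Suc n) = m + m * Suc n" by simp
    then show ?thesis by (simp only: funpow_add o_apply)
  qed
  also have "\<dots> = sc (\<nu>^(2^m) * \<mu>) q" using nu fmq by (simp add: fm_pow_sc sc_sc)
  finally have e: "(fm a b ^^ (m * Suc (Suc n))) q = sc (\<nu>^(2^m) * \<mu>) q" .
  have h1: "\<nu>^(2^m) \<le> 1" using nu by (simp add: power_le_one)
  have h2: "\<nu>^(2^m) * \<mu> \<le> 1 * \<mu>" using h1 assms(1) by (intro mult_right_mono) simp_all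
  have h3: "\<nu>^(2^m) * \<mu> < 1" using h2 assms(2) by linarith
  show ?case
    using e h3 nu assms(1,2) by (intro exI[of _ "\<nu>^(2^m) * \<mu>"]) simp
qed

lemma main:
  assumes a: "a > 0" and b: "b > 0" and q: "ps q"
    and rat: "fst ((fm a b ^^ m) q) / snd ((fm a b ^^ m) q) = fst q / snd q"
    and per: "(fm a b ^^ (m * Suc n)) q = q"
  shows "(fm a b ^^ m) q = q"
proof -
  define r where "r = (fm a b ^^ m) q"
  have rp: "ps r" using fm_pow_ps[OF a b q] r_def by simp
  define \<mu> where "\<mu> = fst r / fst q"
  have mu: "\<mu> > 0" using rp q by (simp add: ps_def \<mu>_def)
  have r1: "fst r = \<mu> * fst q" using q by (simp add: \<mu>_def ps_def)
  have r2: "snd r = \<mu> * snd q"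
  proof -
    have "fst r / snd r = fst q / snd q" using rat r_def by simp
    then have "fst r * snd q = fst q * snd r" using rp q by (simp add: ps_def field_simps)
    then show ?thesis using r1 q by (simp add: ps_def)
  qed
  have rs: "r = sc \<mu> q" using r1 r2 by (simp add: sc_def prod_eq_iff)
  have rs': "(fm a b ^^ m) q = sc \<mu> q" using rs r_def by simp
  have "\<mu> = 1"
  proof (rule ccontr)
    assume "\<mu> \<noteq> 1"
    then consider "\<mu> > 1" | "\<mu> < 1" by linarith
    then show False
    proof cases
      case 1
      then obtain \<nu> where "(fm a b ^^ (m * Suc n)) q = sc \<nu> q" "\<nu> > 1"
        using scale_up[OF 1 rs'] by blast
      then show False using per sc_fix[OF q] by force
    next
      case 2
      then obtain \<nu> where "(fm a b ^^ (m * Suc n)) q = sc \<nu> q" "\<nu> < 1"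
        using scale_down[OF mu 2 rs'] by blast
      then show False using per sc_fix[OF q] by force
    qed
  qed
  then show ?thesis using rs r_def by (simp add: sc_def)
qed

lemma M1_emb: "u \<in> M1 \<Longrightarrow> \<exists>q. u = emb q \<and> ps q"
  by (cases u) (auto simp: M1_def pos4_def emb_def ps_def)

lemma emb_pos4: "ps q \<Longrightarrow> emb q \<in> pos4"
  by (cases q) (auto simp: pos4_def emb_def ps_def)

lemma fm_per_mult: "(fm a b ^^ p) q = q \<Longrightarrow> (fm a b ^^ (p * k)) q = q"
proof (induction k)
  case 0 then show ?case by simp
next
  case (Suc k)
  have "(fm a b ^^ (p * Suc k)) q = (fm a b ^^ p) ((fm a b ^^ (p * k)) q)"
    by (simp only: mult_Suc_right funpow_add o_apply)
  then show ?case using Suc by simp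
qed

theorem lemma5:
  fixes J1 J2 \<beta> a b :: real
  assumes "\<beta> > 0" and "a = exp (J1 * \<beta>)" and "b = exp (J2 * \<beta>)"
  shows "(J2 > 0 \<longrightarrow> (\<forall>p::nat. p \<ge> 2 \<longrightarrow>
            \<not> (\<exists>u \<in> M1 - Fix (F a b). (F a b ^^ p) u = u)))
       \<and> (J2 < 0 \<longrightarrow> (\<forall>p::nat. p \<ge> 3 \<longrightarrow>
            \<not> (\<exists>u \<in> M1 - (Fix (F a b) \<union> Per2 (F a b)). (F a b ^^ p) u = u)))"
proof (intro conjI impI allI notI)
  have a: "a > 0" using assms by simp
  have b: "b > 0" using assms by simp
  {
    fix p :: nat
    assume J2: "J2 > 0" and p: "p \<ge> 2" and ex: "\<exists>u \<in> M1 - Fix (F a b). (F a b ^^ p) u = u"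
    have b1: "b > 1" using assms J2 by simp
    obtain u where u: "u \<in> M1" "u \<notin> Fix (F a b)" "(F a b ^^ p) u = u" using ex by blast
    obtain q where q: "u = emb q" "ps q" using M1_emb[OF u(1)] by blast
    have per: "(fm a b ^^ p) q = q" using u(3) q(1) F_emb_pow emb_inj by metis
    define t where "t = fst q / snd q"
    have t: "t > 0" using q(2) by (simp add: ps_def t_def)
    have "(gr a b ^^ p) t = t" using ratio_pow[OF a b q(2), of p] per t_def by simp
    note gp = this
    have p1: "p \<ge> 1" using p by simp
    have gt: "gr a b t = t"
      by (rule per_mono[where g="gr a b", OF gr_mono[OF a b1] gr_pos[OF a b] t p1 gp])
    have rat: "fst ((fm a b ^^ 1) q) / snd ((fm a b ^^ 1) q) = fst q / snd q"
      using fm_ratio[OF a b q(2)] gt t_def by simp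
    have "(fm a b ^^ (1 * Suc (p - 1))) q = q" using per p by simp
    then have "fm a b q = q" using main[OF a b q(2) rat] by simp
    then have "F a b u = u" using q(1) F_emb by metis
    then have "u \<in> Fix (F a b)" using emb_pos4[OF q(2)] q(1) by (simp add: Fix_def)
    then show False using u(2) by blast
  }
  {
    fix p :: nat
    assume J2: "J2 < 0" and p: "p \<ge> 3"
      and ex: "\<exists>u \<in> M1 - (Fix (F a b) \<union> Per2 (F a b)). (F a b ^^ p) u = u"
    have b1: "b < 1" using assms J2 \<open>\<beta> > 0\<close> by (simp add: mult_neg_pos)
    obtain u where u: "u \<in> M1" "u \<notin> Fix (F a b)" "u \<notin> Per2 (F a b)" "(F a b ^^ p) u = u"
      using ex by blast
    obtain q where q: "u = emb q" "ps q" using M1_emb[OF u(1)] by blast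
    have per: "(fm a b ^^ p) q = q" using u(4) q(1) F_emb_pow emb_inj by metis
    have per2: "(fm a b ^^ (2 * p)) q = q" using fm_per_mult[OF per, of 2] by (simp add: mult.commute)
    define t where "t = fst q / snd q"
    have t: "t > 0" using q(2) by (simp add: ps_def t_def)
    have "(gr a b ^^ (2 * p)) t = t" using ratio_pow[OF a b q(2), of "2*p"] per2 t_def by simp
    then have "((gr a b ^^ 2) ^^ p) t = t" by (simp add: funpow_mult)
    note gp = this
    have mono2: "\<And>s t. 0 < s \<Longrightarrow> s < t \<Longrightarrow> (gr a b ^^ 2) s < (gr a b ^^ 2) t"
    proof -
      fix s t :: real assume s: "0 < s" "s < t"
      have "gr a b t < gr a b s" using gr_anti[OF a b b1 s] .
      then have "gr a b (gr a b s) < gr a b (gr a b t)"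
        using gr_anti[OF a b b1] gr_pos[OF a b] s by simp
      then show "(gr a b ^^ 2) s < (gr a b ^^ 2) t" by (simp add: numeral_2_eq_2)
    qed
    have pos2: "\<And>s. 0 < s \<Longrightarrow> 0 < (gr a b ^^ 2) s" using gr_pow_pos[OF a b] by blast
    have p1: "p \<ge> 1" using p by simp
    have g2: "(gr a b ^^ 2) t = t"
      by (rule per_mono[where g="gr a b ^^ 2", OF mono2 pos2 t p1 gp])
    have rat: "fst ((fm a b ^^ 2) q) / snd ((fm a b ^^ 2) q) = fst q / snd q"
      using ratio_pow[OF a b q(2), of 2] g2 t_def by simp
    have "(fm a b ^^ (2 * Suc (p - 1))) q = q" using per2 p by simp
    then have f2: "(fm a b ^^ 2) q = q" using main[OF a b q(2) rat] by simp
    then have "(F a b ^^ 2) u = u" using q(1) F_emb_pow by metis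
    then have "u \<in> Fix (F a b) \<or> u \<in> Per2 (F a b)"
      using emb_pos4[OF q(2)] q(1) by (auto simp: Fix_def Per2_def)
    then show False using u(2,3) by blast
  }
qed

end
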